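(* Let $\alpha \ge 1$ and let $\mathcal{F}$ be a $k$-uniform hypergraph on $[n]$. Suppose that the transposition $(ij)$ of two vertices $i \neq j$ is an automorphism of $\mathcal{F}$. Let $\vec{w} \in \mathbb{R}^n$ with $\|\vec{w}\|_\alpha = 1$ and $w_t \ge 0$ for all $1 \le t \le n$. Define $\vec{w}'$ by $w'_i = w'_j = ((w_i^\alpha + w_j^\alpha)/2)^{1/\alpha}$ and $w'_t = w_t$ for $t \in [n]\setminus\{i,j\}$. Then $\tau_{\mathcal{F}}(\vec{w}',\dots,\vec{w}') \ge \tau_{\mathcal{F}}(\vec{w},\dots,\vec{w})$.
   Context: For a $k$-uniform hypergraph $\mathcal{F}$ on $[n]$ and $x\in\mathbb{R}^n$, $\tau_{\mathcal{F}}(x,\dots,x) = k!\sum_{\{i_1,\dots,i_k\}\in E(\mathcal{F})}x_{i_1}\cdots x_{i_k}$. $\|x\|_\alpha = (\sum_i|x_i|^\alpha)^{1/\alpha}$. *)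

theory Defs
  imports "HOL-Analysis.Analysis" "HOL-Combinatorics.Transposition"
begin

definition uniform_hypergraph :: "nat \<Rightarrow> nat \<Rightarrow> nat set set \<Rightarrow> bool" where
  "uniform_hypergraph k n F \<longleftrightarrow> (\<forall>e\<in>F. e \<subseteq> {1..n} \<and> card e = k)"

definition hypergraph_automorphism :: "nat set set \<Rightarrow> (nat \<Rightarrow> nat) \<Rightarrow> bool" where
  "hypergraph_automorphism F \<sigma> \<longleftrightarrow> (\<lambda>e. \<sigma> ` e) ` F = F"

text \<open>tau_F(x,...,x) = k! * sum over edges of the product of the coordinates.\<close>
definition tau :: "nat \<Rightarrow> nat set set \<Rightarrow> (nat \<Rightarrow> real) \<Rightarrow> real" where
  "tau k F x = fact k * (\<Sum>e\<in>F. \<Prod>t\<in>e. x t)"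

definition alpha_norm :: "nat \<Rightarrow> real \<Rightarrow> (nat \<Rightarrow> real) \<Rightarrow> real" where
  "alpha_norm n \<alpha> x = (\<Sum>t\<in>{1..n}. \<bar>x t\<bar> powr \<alpha>) powr (1 / \<alpha>)"

end

theory Submission
  imports Defs
begin

lemma pm_pos:
  fixes a b p :: real assumes "a > 0" "b > 0" "p \<ge> 1"
  shows "((a+b)/2) powr p \<le> (a powr p + b powr p)/2"
proof -
  have "convex_on {0<..} (\<lambda>x. x powr p)" using powr_convex assms by blast
  from convex_onD[OF this, of "1/2" a b]
  have "((1 - 1/2) *\<^sub>R a + (1/2) *\<^sub>R b) powr p \<le> (1 - 1/2) * a powr p + (1/2) * b powr p"
    using assms by simp
  then show ?thesis by (simp add: field_simps)
qed
lemma half_pow: fixes b p :: real assumes "b \<ge> 0" "p \<ge> 1"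
  shows "(b/2) powr p \<le> b powr p / 2"
proof -
  have "(1/2::real) powr p \<le> (1/2) powr 1" using assms by (intro powr_mono') auto
  then have "b powr p * (1/2) powr p \<le> b powr p * (1/2)" by (intro mult_left_mono) auto
  moreover have "(b/2) powr p = b powr p * (1/2) powr p" using assms
    by (metis powr_mult divide_inverse inverse_eq_divide less_eq_real_def zero_le_divide_1_iff zero_le_numeral)
  ultimately show ?thesis by simp
qed
lemma pm:
  fixes a b p :: real assumes "a \<ge> 0" "b \<ge> 0" "p \<ge> 1"
  shows "(a+b)/2 \<le> ((a powr p + b powr p)/2) powr (1/p)"
proof -
  have "((a+b)/2) powr p \<le> (a powr p + b powr p)/2"
  proof (cases "a = 0 \<or> b = 0")
    case True then show ?thesis using half_pow assms by (auto)
  next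
    case False then show ?thesis using pm_pos assms by auto
  qed
  then have "(((a+b)/2) powr p) powr (1/p) \<le> ((a powr p + b powr p)/2) powr (1/p)"
    using assms by (intro powr_mono2) auto
  then show ?thesis using assms by (simp add: powr_powr)
qed
lemma pointwise:
  fixes w :: "nat \<Rightarrow> real" and e :: "nat set"
  assumes fin: "finite e" and nn: "\<forall>t\<in>e. w t \<ge> 0" and ij: "i \<noteq> j"
    and m1: "2*m \<ge> w i + w j" and m2: "m*m \<ge> w i * w j" and wi: "w i \<ge> 0" and wj: "w j \<ge> 0"
  shows "2 * (\<Prod>t\<in>e. (w(i:=m, j:=m)) t) \<ge> (\<Prod>t\<in>e. w t) + (\<Prod>t\<in>e. w (Transposition.transpose i j t))"
proof -
  define R where "R = (\<Prod>t\<in>e-{i,j}. w t)"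
  have R0: "R \<ge> 0" unfolding R_def using nn by (intro prod_nonneg) auto
  have eq1: "(\<Prod>t\<in>e-{i,j}. (w(i:=m, j:=m)) t) = R" unfolding R_def by (intro prod.cong) auto
  have eq2: "(\<Prod>t\<in>e-{i,j}. w (Transposition.transpose i j t)) = R" unfolding R_def by (intro prod.cong) auto
  have m0: "m \<ge> 0" using m1 wi wj by linarith
  have split: "\<And>f :: nat \<Rightarrow> real. (\<Prod>t\<in>e. f t) = (if i \<in> e then f i else 1) * (if j \<in> e then f j else 1) * (\<Prod>t\<in>e-{i,j}. f t)"
  proof -
    fix f :: "nat \<Rightarrow> real"
    have A: "(\<Prod>t\<in>e. f t) = (\<Prod>t\<in>e \<inter> {i,j}. f t) * (\<Prod>t\<in>e-{i,j}. f t)"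
      using fin by (metis Diff_eq prod.Int_Diff)
    have "(\<Prod>t\<in>e \<inter> {i,j}. f t) = (if i \<in> e then f i else 1) * (if j \<in> e then f j else 1)"
      using ij by (cases "i \<in> e"; cases "j \<in> e") (auto simp: Int_insert_right)
    then show "(\<Prod>t\<in>e. f t) = (if i \<in> e then f i else 1) * (if j \<in> e then f j else 1) * (\<Prod>t\<in>e-{i,j}. f t)" using A by simp
  qed
  have k1: "R * w i + R * w j \<le> R * (m * 2)" using mult_left_mono[OF m1 R0] by (simp add: algebra_simps)
  have k2: "R * (w i * w j) \<le> R * (m * m)" using mult_left_mono[OF m2 R0] .
  show ?thesis
    unfolding split[of "w(i:=m, j:=m)"] split[of w] split[of "\<lambda>t. w (Transposition.transpose i j t)"] eq1 eq2 R_def[symmetric]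
    using ij R0 m0 m1 m2 wi wj k1 k2
    by (cases "i \<in> e"; cases "j \<in> e") (auto simp: algebra_simps intro: mult_right_mono [of _ _ R, simplified]  )
qed

theorem lemma11:
  fixes \<alpha> :: real and k n i j :: nat and F :: "nat set set" and w :: "nat \<Rightarrow> real"
  assumes "\<alpha> \<ge> 1"
    and "uniform_hypergraph k n F"
    and "i \<in> {1..n}" and "j \<in> {1..n}" and "i \<noteq> j"
    and "hypergraph_automorphism F (Transposition.transpose i j)"
    and "alpha_norm n \<alpha> w = 1"
    and "\<forall>t\<in>{1..n}. w t \<ge> 0"
  shows "tau k F (w(i := ((w i powr \<alpha> + w j powr \<alpha>) / 2) powr (1 / \<alpha>),
                    j := ((w i powr \<alpha> + w j powr \<alpha>) / 2) powr (1 / \<alpha>)))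
         \<ge> tau k F w"
proof -
  define m where "m = ((w i powr \<alpha> + w j powr \<alpha>) / 2) powr (1 / \<alpha>)"
  define \<sigma> where "\<sigma> = Transposition.transpose i j"
  have wi: "w i \<ge> 0" and wj: "w j \<ge> 0" using assms by auto
  have m1: "2*m \<ge> w i + w j" using pm[OF wi wj assms(1)] unfolding m_def by simp
  have "((w i + w j)/2) * ((w i + w j)/2) \<le> m * m"
    using m1 wi wj by (intro mult_mono) auto
  moreover have "w i * w j \<le> ((w i + w j)/2) * ((w i + w j)/2)"
    using sum_squares_ge_zero[of "w i - w j" 0] by (simp add: algebra_simps power2_eq_square)
  ultimately have m2: "m*m \<ge> w i * w j" by linarith
  have Fsub: "F \<subseteq> Pow {1..n}" using assms(2) unfolding uniform_hypergraph_def by auto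
  then have finF: "finite F" by (rule finite_subset) simp
  have injs: "inj \<sigma>" unfolding \<sigma>_def by (rule inj_transpose)
  have injF: "inj_on (\<lambda>e. \<sigma> ` e) F" using injs by (simp add: inj_on_def inj_image_eq_iff)
  have imF: "(\<lambda>e. \<sigma> ` e) ` F = F" using assms(6) unfolding hypergraph_automorphism_def \<sigma>_def .
  have "(\<Sum>e\<in>F. \<Prod>t\<in>e. w t) = (\<Sum>e\<in>(\<lambda>e. \<sigma> ` e) ` F. \<Prod>t\<in>e. w t)" using imF by simp
  also have "\<dots> = (\<Sum>e\<in>F. \<Prod>t\<in>\<sigma> ` e. w t)" using sum.reindex[OF injF] by simp
  also have "\<dots> = (\<Sum>e\<in>F. \<Prod>t\<in>e. w (\<sigma> t))"
    by (intro sum.cong refl) (metis (no_types, lifting) injs inj_on_subset prod.reindex subset_UNIV comp_apply prod.cong)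
  finally have sw: "(\<Sum>e\<in>F. \<Prod>t\<in>e. w t) = (\<Sum>e\<in>F. \<Prod>t\<in>e. w (\<sigma> t))" .
  have pw: "\<And>e. e \<in> F \<Longrightarrow> 2 * (\<Prod>t\<in>e. (w(i:=m, j:=m)) t) \<ge> (\<Prod>t\<in>e. w t) + (\<Prod>t\<in>e. w (\<sigma> t))"
  proof -
    fix e assume "e \<in> F"
    then have es: "e \<subseteq> {1..n}" using Fsub by auto
    then have "finite e" by (rule finite_subset) simp
    moreover have "\<forall>t\<in>e. w t \<ge> 0" using es assms(8) by auto
    ultimately show "2 * (\<Prod>t\<in>e. (w(i:=m, j:=m)) t) \<ge> (\<Prod>t\<in>e. w t) + (\<Prod>t\<in>e. w (\<sigma> t))"
      unfolding \<sigma>_def using pointwise[OF _ _ assms(5) m1 m2 wi wj] by blast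
  qed
  have "2 * (\<Sum>e\<in>F. \<Prod>t\<in>e. (w(i:=m, j:=m)) t) \<ge> (\<Sum>e\<in>F. (\<Prod>t\<in>e. w t) + (\<Prod>t\<in>e. w (\<sigma> t)))"
    unfolding sum_distrib_left by (intro sum_mono pw)
  then have "(\<Sum>e\<in>F. \<Prod>t\<in>e. (w(i:=m, j:=m)) t) \<ge> (\<Sum>e\<in>F. \<Prod>t\<in>e. w t)"
    using sw by (simp add: sum.distrib)
  then show ?thesis unfolding tau_def m_def[symmetric]
    by (intro mult_left_mono) auto
qed

end
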